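(* Let $T$ be a triangle from a shape-regular family ($h_T\le\varrho r_T$), $\Gamma_{h,T}$ an open line segment with endpoints on $\partial T$ dividing $T$ into nonempty open parts $T_h^\pm$, and $\mu^\pm>0$. There is a constant $C>0$ independent of $h_T$ and of the location of $\Gamma_{h,T}$ such that $$\|\nabla\mathbf{v}_h\|_{L^2(\partial T)}\le Ch_T^{-1/2}\|\nabla\mathbf{v}_h\|_{L^2(T)}\qquad\forall(\mathbf{v}_h,q_h)\in\mathbf{V}M_h^{IFE}(T).$$
   Context: $\mathbf{n}_h$ is the unit normal of $\Gamma_{h,T}$ pointing into $T_h^+$; $\sigma(\mu,\mathbf{v},q)=2\mu\boldsymbol{\epsilon}(\mathbf{v})-q\mathbb{I}$, $\boldsymbol{\epsilon}(\mathbf{v})=\frac12(\nabla\mathbf{v}+(\nabla\mathbf{v})^T)$. $\mathbf{V}M_h^{IFE}(T)$ is the set of pairs $(\mathbf{v},q)$ equal to $(\mathbf{v}^\pm,q^\pm)$ on $T_h^\pm$, where $\mathbf{v}^\pm\in P_1(T)^2$, $q^\pm\in P_0(T)$ satisfy $\sigma(\mu^+,\mathbf{v}^+,q^+)\mathbf{n}_h=\sigma(\mu^-,\mathbf{v}^-,q^-)\mathbf{n}_h$, $\mathbf{v}^+=\mathbf{v}^-$ on $\Gamma_{h,T}$, $\nabla\cdot\mathbf{v}^+=\nabla\cdot\mathbf{v}^-$. On $\partial T$, $\nabla\mathbf{v}_h$ is the trace of the piecewise constant gradient. *)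

theory Defs
  imports "HOL-Analysis.Analysis"
begin

definition tri :: "real^2 \<Rightarrow> real^2 \<Rightarrow> real^2 \<Rightarrow> (real^2) set" where
  "tri a b c = interior (convex hull {a, b, c})"

definition inradius :: "(real^2) set \<Rightarrow> real" where
  "inradius S = Sup {r. \<exists>x. ball x r \<subseteq> S}"

(* the two subelements T_h^+ and T_h^- cut off by the line through e1 with unit normal n
   (n points into T_h^+) *)
definition subplus :: "(real^2) set \<Rightarrow> real^2 \<Rightarrow> real^2 \<Rightarrow> (real^2) set" where
  "subplus T e1 n = {x \<in> T. n \<bullet> (x - e1) > 0}"

definition subminus :: "(real^2) set \<Rightarrow> real^2 \<Rightarrow> real^2 \<Rightarrow> (real^2) set" where
  "subminus T e1 n = {x \<in> T. n \<bullet> (x - e1) < 0}"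

(* epsilon(v) for v x = G *v x + b, i.e. grad v = G *)
definition strain :: "real^2^2 \<Rightarrow> real^2^2" where
  "strain G = (1/2) *\<^sub>R (G + transpose G)"

definition stress :: "real \<Rightarrow> real^2^2 \<Rightarrow> real \<Rightarrow> real^2^2" where
  "stress \<mu> G q = (2 * \<mu>) *\<^sub>R strain G - q *\<^sub>R mat 1"

(* (v,q) in VM_h^IFE(T): v^+ x = Ap *v x + bp, q^+ = qp, v^- x = Am *v x + bm, q^- = qm;
   interface Gamma = open segment e1 e2 with unit normal n *)
definition ife :: "real \<Rightarrow> real \<Rightarrow> real^2 \<Rightarrow> real^2 \<Rightarrow> real^2 \<Rightarrow>
    real^2^2 \<Rightarrow> real^2 \<Rightarrow> real \<Rightarrow> real^2^2 \<Rightarrow> real^2 \<Rightarrow> real \<Rightarrow> bool" where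
  "ife \<mu>p \<mu>m e1 e2 n Ap bp qp Am bm qm \<longleftrightarrow>
     stress \<mu>p Ap qp *v n = stress \<mu>m Am qm *v n \<and>
     (\<forall>x\<in>open_segment e1 e2. Ap *v x + bp = Am *v x + bm) \<and>
     trace Ap = trace Am"

definition grad_in :: "(real^2) set \<Rightarrow> real^2^2 \<Rightarrow> real^2^2 \<Rightarrow> real^2 \<Rightarrow> real^2^2" where
  "grad_in Tp Ap Am x = (if x \<in> Tp then Ap else Am)"

(* trace of the piecewise constant gradient on the boundary *)
definition grad_bd :: "(real^2) set \<Rightarrow> real^2^2 \<Rightarrow> real^2^2 \<Rightarrow> real^2 \<Rightarrow> real^2^2" where
  "grad_bd Tp Ap Am x = (if x \<in> closure Tp then Ap else Am)"

definition edge_integral :: "(real^2 \<Rightarrow> real) \<Rightarrow> real^2 \<Rightarrow> real^2 \<Rightarrow> real" where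
  "edge_integral f a b = integral {0..1} (\<lambda>t. f (a + t *\<^sub>R (b - a))) * norm (b - a)"

definition bd_integral :: "(real^2 \<Rightarrow> real) \<Rightarrow> real^2 \<Rightarrow> real^2 \<Rightarrow> real^2 \<Rightarrow> real" where
  "bd_integral f a b c = edge_integral f a b + edge_integral f b c + edge_integral f c a"

end

theory Submission
  imports Defs
begin

lemma norm_mat2: "(norm (A::real^2^2))^2 = (A$1$1)^2 + (A$1$2)^2 + (A$2$1)^2 + (A$2$2)^2"
  by (simp add: norm_vec_def L2_set_def sum_2)

lemma norm_vec2: "(norm (v::real^2))^2 = (v$1)^2 + (v$2)^2"
  by (simp add: norm_vec_def L2_set_def sum_2)

lemma diff_aux: "(x::real) - y = r \<Longrightarrow> 0 \<le> r \<Longrightarrow> y \<le> x" by linarith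

lemma alg_core:
  fixes p q d1 d2 x11 x12 x21 x22 a11 a12 a21 a22 mp mm qp qm :: real
  assumes n1: "p^2 + q^2 = 1" and dn: "p*d1 + q*d2 = 0" and dnz: "d1 \<noteq> 0 \<or> d2 \<noteq> 0"
    and r1: "x11*d1 + x12*d2 = 0" and r2: "x21*d1 + x22*d2 = 0" and tr: "x11 + x22 = 0"
    and s1: "mp*(2*(a11+x11)*p + ((a12+x12)+(a21+x21))*q) - qp*p = mm*(2*a11*p + (a12+a21)*q) - qm*p"
    and s2: "mp*(((a21+x21)+(a12+x12))*p + 2*(a22+x22)*q) - qp*q = mm*((a21+a12)*p + 2*a22*q) - qm*q"
    and mp: "mp > 0"
  shows "x11^2+x12^2+x21^2+x22^2 \<le> 4*((mm-mp)/mp)^2 * (a11^2+a12^2+a21^2+a22^2)"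
proof -
  define lam where "lam = -q*d1 + p*d2"
  have d1: "d1 = -q*lam" and d2: "d2 = p*lam" unfolding lam_def using n1 dn by algebra+
  have lnz: "lam \<noteq> 0" using dnz d1 d2 by auto
  have t1: "-q*x11 + p*x12 = 0"
  proof -
    have "lam*(-q*x11 + p*x12) = 0" using r1 d1 d2 by (simp add: algebra_simps)
    thus ?thesis using lnz by simp
  qed
  have t2: "-q*x21 + p*x22 = 0"
  proof -
    have "lam*(-q*x21 + p*x22) = 0" using r2 d1 d2 by (simp add: algebra_simps)
    thus ?thesis using lnz by simp
  qed
  define al where "al = -q*(x11*p + x12*q) + p*(x21*p + x22*q)"
  have e11: "x11 = -q*p*al" unfolding al_def using n1 t1 t2 tr by algebra
  have e12: "x12 = -q*q*al" unfolding al_def using n1 t1 t2 tr by algebra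
  have e21: "x21 = p*p*al" unfolding al_def using n1 t1 t2 tr by algebra
  have e22: "x22 = p*q*al" unfolding al_def using n1 t1 t2 tr by algebra
  have sq: "x11^2+x12^2+x21^2+x22^2 = al^2"
    unfolding e11 e12 e21 e22 using n1 by algebra
  define sv where "sv = a11*(-2*q*p) + a12*(p^2-q^2) + a21*(p^2-q^2) + a22*(2*p*q)"
  have st: "mp * (sv + al) = mm * sv"
    unfolding sv_def using s1 s2 n1 e11 e12 e21 e22 by algebra
  hence ale: "al = (mm-mp)/mp * sv" using mp by (simp add: field_simps)
  have cs: "sv^2 \<le> 4*(a11^2+a12^2+a21^2+a22^2)"
  proof -
    have "(a11^2+a12^2+a21^2+a22^2) * ((-2*q*p)^2 + (p^2-q^2)^2 + (p^2-q^2)^2 + (2*p*q)^2) - sv^2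
      = (a11*(p^2-q^2) - a12*(-2*q*p))^2 + (a11*(p^2-q^2) - a21*(-2*q*p))^2 + (a11*(2*p*q) - a22*(-2*q*p))^2
        + (a12*(p^2-q^2) - a21*(p^2-q^2))^2 + (a12*(2*p*q) - a22*(p^2-q^2))^2 + (a21*(2*p*q) - a22*(p^2-q^2))^2"
      unfolding sv_def by algebra
    moreover have "0 \<le> (a11*(p^2-q^2) - a12*(-2*q*p))^2 + (a11*(p^2-q^2) - a21*(-2*q*p))^2 + (a11*(2*p*q) - a22*(-2*q*p))^2
        + (a12*(p^2-q^2) - a21*(p^2-q^2))^2 + (a12*(2*p*q) - a22*(p^2-q^2))^2 + (a21*(2*p*q) - a22*(p^2-q^2))^2"
      by (intro add_nonneg_nonneg zero_le_power2)
    ultimately have "sv^2 \<le> (a11^2+a12^2+a21^2+a22^2) * ((-2*q*p)^2 + (p^2-q^2)^2 + (p^2-q^2)^2 + (2*p*q)^2)"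
      by (rule diff_aux)
    also have "(-2*q*p)^2 + (p^2-q^2)^2 + (p^2-q^2)^2 + (2*p*q)^2 = 2"
      using n1 by algebra
    also have "(a11^2+a12^2+a21^2+a22^2) * 2 \<le> 4*(a11^2+a12^2+a21^2+a22^2)"
      by (simp add: add_nonneg_nonneg)
    finally show ?thesis .
  qed
  have "al^2 = ((mm-mp)/mp)^2 * sv^2" unfolding ale by (simp add: power_mult_distrib power_divide)
  also have "\<dots> \<le> ((mm-mp)/mp)^2 * (4*(a11^2+a12^2+a21^2+a22^2))"
    by (intro mult_left_mono cs) simp
  finally show ?thesis using sq by (simp add: algebra_simps)
qed

lemma stress_c1: "(stress m G q *v n)$1 = m*(2*G$1$1*n$1 + (G$1$2+G$2$1)*n$2) - q*n$1"
  apply (simp add: stress_def strain_def matrix_vector_mult_def sum_2 transpose_def mat_def)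
  apply (simp add: algebra_simps)
  done
lemma stress_c2: "(stress m G q *v n)$2 = m*((G$2$1+G$1$2)*n$1 + 2*G$2$2*n$2) - q*n$2"
  apply (simp add: stress_def strain_def matrix_vector_mult_def sum_2 transpose_def mat_def)
  apply (simp add: algebra_simps)
  done

lemma ife_bound:
  fixes mup mum :: real
  assumes ife: "ife mup mum e1 e2 n Ap bp qp Am bm qm" and ne: "e1 \<noteq> e2" and nn: "norm n = 1"
    and nd: "n \<bullet> (e2 - e1) = 0" and mp: "mup > 0"
  shows "norm Ap \<le> (1 + 2*\<bar>mum-mup\<bar>/mup) * norm Am"
proof -
  define D where "D = Ap - Am"
  define x1 where "x1 = (1/2) *\<^sub>R e1 + (1/2) *\<^sub>R e2"
  define x2 where "x2 = (3/4) *\<^sub>R e1 + (1/4) *\<^sub>R e2"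
  have "x1 \<in> open_segment e1 e2" unfolding x1_def in_segment using ne
    by (intro conjI exI[of _ "1/2"]) auto
  hence h1: "Ap *v x1 + bp = Am *v x1 + bm" using ife unfolding ife_def by blast
  have "x2 \<in> open_segment e1 e2" unfolding x2_def in_segment using ne
    by (intro conjI exI[of _ "1/4"]) auto
  hence h2: "Ap *v x2 + bp = Am *v x2 + bm" using ife unfolding ife_def by blast
  have "x1 - x2 = (1/4) *\<^sub>R (e2 - e1)" unfolding x1_def x2_def by (simp add: vec_eq_iff field_simps)
  have k1: "\<And>i. (Ap *v x1)$i + bp$i = (Am *v x1)$i + bm$i" using h1 by (metis vector_add_component)
  have k2: "\<And>i. (Ap *v x2)$i + bp$i = (Am *v x2)$i + bm$i" using h2 by (metis vector_add_component)
  have "D *v (x1 - x2) = 0"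
  proof -
    have "D *v (x1 - x2) = Ap *v x1 - Am *v x1 - (Ap *v x2 - Am *v x2)" unfolding D_def
      by (simp add: matrix_vector_mult_diff_distrib matrix_vector_mult_diff_rdistrib)
    also have "\<dots> = 0" unfolding vec_eq_iff
    proof
      fix i show "(Ap *v x1 - Am *v x1 - (Ap *v x2 - Am *v x2)) $ i = (0::real^2) $ i"
        using k1[of i] k2[of i] by simp
    qed
    finally show ?thesis .
  qed
  hence Dd: "D *v (e2 - e1) = 0" using \<open>x1 - x2 = _\<close> by (simp add: matrix_vector_mult_scaleR)
  have st: "stress mup Ap qp *v n = stress mum Am qm *v n" and trA: "trace Ap = trace Am"
    using ife unfolding ife_def by auto
  have n1: "(n$1)^2 + (n$2)^2 = 1" using nn norm_vec2[of n] by simp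
  have dn: "n$1 * (e2-e1)$1 + n$2 * (e2-e1)$2 = 0" using nd by (simp add: inner_vec_def sum_2)
  have dnz: "(e2-e1)$1 \<noteq> 0 \<or> (e2-e1)$2 \<noteq> 0"
  proof (rule ccontr)
    assume "\<not> ?thesis"
    hence "e2 - e1 = 0" by (simp add: vec_eq_iff forall_2)
    thus False using ne by simp
  qed
  have r1: "D$1$1 * (e2-e1)$1 + D$1$2 * (e2-e1)$2 = 0"
    using arg_cong[OF Dd, of "\<lambda>v. v$1"] by (simp add: matrix_vector_mult_def sum_2)
  have r2: "D$2$1 * (e2-e1)$1 + D$2$2 * (e2-e1)$2 = 0"
    using arg_cong[OF Dd, of "\<lambda>v. v$2"] by (simp add: matrix_vector_mult_def sum_2)
  have tr: "D$1$1 + D$2$2 = 0" using trA unfolding D_def by (simp add: trace_def sum_2)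
  have c1: "(stress mup Ap qp *v n)$1 = (stress mum Am qm *v n)$1" using st by simp
  have c2: "(stress mup Ap qp *v n)$2 = (stress mum Am qm *v n)$2" using st by simp
  have s1: "mup*(2*(Am$1$1+D$1$1)*n$1 + ((Am$1$2+D$1$2)+(Am$2$1+D$2$1))*n$2) - qp*n$1
     = mum*(2*Am$1$1*n$1 + (Am$1$2+Am$2$1)*n$2) - qm*n$1"
    using c1 unfolding D_def stress_c1 by simp
  have s2: "mup*(((Am$2$1+D$2$1)+(Am$1$2+D$1$2))*n$1 + 2*(Am$2$2+D$2$2)*n$2) - qp*n$2
     = mum*((Am$2$1+Am$1$2)*n$1 + 2*Am$2$2*n$2) - qm*n$2"
    using c2 unfolding D_def stress_c2 by simp
  have "(norm D)^2 \<le> 4*((mum-mup)/mup)^2 * (norm Am)^2"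
    unfolding norm_mat2
    by (rule alg_core[OF n1 dn dnz r1 r2 tr s1 s2 mp])
  also have "\<dots> = (2*\<bar>mum-mup\<bar>/mup * norm Am)^2" by (simp add: power_mult_distrib power_divide)
  finally have sqle: "(norm D)^2 \<le> (2*\<bar>mum-mup\<bar>/mup * norm Am)^2" .
  have K0: "0 \<le> 2*\<bar>mum-mup\<bar>/mup * norm Am" using mp by simp
  have nD: "norm D \<le> 2*\<bar>mum-mup\<bar>/mup * norm Am" by (rule power2_le_imp_le[OF sqle K0])
  have "norm Ap \<le> norm Am + norm D" unfolding D_def using norm_triangle_ineq[of Am "Ap - Am"] by simp
  also have "\<dots> \<le> norm Am + 2*\<bar>mum-mup\<bar>/mup * norm Am" using nD by linarith
  also have "\<dots> = (1 + 2*\<bar>mum-mup\<bar>/mup) * norm Am" by (simp add: distrib_right)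
  finally show ?thesis .
qed


lemma edge_le:
  assumes "\<And>x. 0 \<le> f x" "\<And>x. f x \<le> M" "0 \<le> M"
  shows "edge_integral f u v \<le> M * norm (v - u)"
proof -
  have "integral {0..1} (\<lambda>t. f (u + t *\<^sub>R (v - u))) \<le> M"
  proof (cases "(\<lambda>t. f (u + t *\<^sub>R (v - u))) integrable_on {0..1}")
    case True
    have "integral {0..1} (\<lambda>t. f (u + t *\<^sub>R (v - u))) \<le> integral {0..1} (\<lambda>t::real. M)"
      by (rule Henstock_Kurzweil_Integration.integral_le[OF True Henstock_Kurzweil_Integration.integrable_const_ivl]) (use assms in auto)
    thus ?thesis by simp
  next
    case False thus ?thesis using assms by (simp add: not_integrable_integral)
  qed
  thus ?thesis unfolding edge_integral_def by (intro mult_right_mono) auto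
qed

lemma ball_measure_lb:
  fixes T :: "(real^2) set" and m :: real
  assumes Tm: "T \<in> lmeasurable" and B: "ball x r \<subseteq> T" and r: "r \<ge> 0" and m: "m \<ge> 0"
  shows "integral T (\<lambda>_. m) \<ge> m * (pi * r^2)"
proof -
  have "integral (ball x r) (\<lambda>_. m) \<le> integral T (\<lambda>_. m)"
    using B Tm m by (intro integral_subset_le integrable_on_const) auto
  moreover have "integral (ball x r) (\<lambda>_. m) = m * measure lebesgue (ball x r)"
    using lmeasure_integral[of "ball x r"] Henstock_Kurzweil_Integration.integral_mult_right[where c=m and S="ball x r" and f="\<lambda>_. 1::real"]
    by simp
  moreover have "measure lebesgue (ball x r) = measure lborel (ball x r)"
    by (simp add: measure_completion)
  moreover have "measure lborel (ball x r) = r^2 * pi" using circle_area r by blast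
  ultimately show ?thesis by (simp add: algebra_simps)
qed


theorem lemma5p2:
  fixes \<rho> \<mu>p \<mu>m :: real
  assumes "\<mu>p > 0" and "\<mu>m > 0"
  shows "\<exists>C>0. \<forall>a b c e1 e2 n Ap bp qp Am bm qm.
     \<not> collinear {a, b, c} \<and>
     diameter (tri a b c) \<le> \<rho> * inradius (tri a b c) \<and>
     e1 \<in> frontier (tri a b c) \<and> e2 \<in> frontier (tri a b c) \<and> e1 \<noteq> e2 \<and>
     open_segment e1 e2 \<subseteq> tri a b c \<and>
     norm n = 1 \<and> n \<bullet> (e2 - e1) = 0 \<and>
     subplus (tri a b c) e1 n \<noteq> {} \<and> subminus (tri a b c) e1 n \<noteq> {} \<and>
     ife \<mu>p \<mu>m e1 e2 n Ap bp qp Am bm qm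
     \<longrightarrow>
     sqrt (bd_integral (\<lambda>x. (norm (grad_bd (subplus (tri a b c) e1 n) Ap Am x))\<^sup>2) a b c)
       \<le> C * diameter (tri a b c) powr (-1/2) *
         sqrt (integral (tri a b c) (\<lambda>x. (norm (grad_in (subplus (tri a b c) e1 n) Ap Am x))\<^sup>2))"
proof -
  define L where "L = 1 + 2*\<bar>\<mu>m-\<mu>p\<bar>/\<mu>p + 2*\<bar>\<mu>p-\<mu>m\<bar>/\<mu>m"
  have L1: "L \<ge> 1" unfolding L_def using assms by (simp add: add_nonneg_nonneg)
  define C where "C = 1 + 2*\<bar>\<rho>\<bar>*L"
  have Cpos: "C > 0" unfolding C_def using L1 by (simp add: add_pos_nonneg)
  show ?thesis
  proof (intro exI[of _ C] conjI allI impI)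
    show "C > 0" by (rule Cpos)
    fix a b c e1 e2 n Ap bp qp Am bm qm
    assume H: "\<not> collinear {a, b, c} \<and>
     diameter (tri a b c) \<le> \<rho> * inradius (tri a b c) \<and>
     e1 \<in> frontier (tri a b c) \<and> e2 \<in> frontier (tri a b c) \<and> e1 \<noteq> e2 \<and>
     open_segment e1 e2 \<subseteq> tri a b c \<and>
     norm n = 1 \<and> n \<bullet> (e2 - e1) = 0 \<and>
     subplus (tri a b c) e1 n \<noteq> {} \<and> subminus (tri a b c) e1 n \<noteq> {} \<and>
     ife \<mu>p \<mu>m e1 e2 n Ap bp qp Am bm qm"
    define T where "T = tri a b c"
    define Tp where "Tp = subplus T e1 n"
    define h where "h = diameter T"
    define HH where "HH = convex hull {a, b, c}"
    have TH: "T = interior HH" unfolding T_def HH_def tri_def by simp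
    have hrho: "h \<le> \<rho> * inradius T" using H unfolding T_def h_def by blast
    have ne: "e1 \<noteq> e2" and nn: "norm n = 1" and nd: "n \<bullet> (e2 - e1) = 0" using H by auto
    have Tpne: "Tp \<noteq> {}" using H unfolding Tp_def T_def by blast
    have ifeP: "ife \<mu>p \<mu>m e1 e2 n Ap bp qp Am bm qm" using H by blast
    have ifeM: "ife \<mu>m \<mu>p e1 e2 n Am bm qm Ap bp qp" using ifeP unfolding ife_def by (metis)
    define nA where "nA = norm Ap"
    define nM where "nM = norm Am"
    have "nA \<le> (1 + 2*\<bar>\<mu>m-\<mu>p\<bar>/\<mu>p) * nM" unfolding nA_def nM_def
      by (rule ife_bound[OF ifeP ne nn nd assms(1)])
    also have "\<dots> \<le> L * nM" unfolding L_def nM_def using assms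
      by (intro mult_right_mono) auto
    finally have AM: "nA \<le> L * nM" .
    have "nM \<le> (1 + 2*\<bar>\<mu>p-\<mu>m\<bar>/\<mu>m) * nA" unfolding nA_def nM_def
      by (rule ife_bound[OF ifeM ne nn nd assms(2)])
    also have "\<dots> \<le> L * nA" unfolding L_def nA_def using assms
      by (intro mult_right_mono) auto
    finally have MA: "nM \<le> L * nA" .
    define M where "M = max (nA^2) (nM^2)"
    define m where "m = min (nA^2) (nM^2)"
    have m0: "m \<ge> 0" and M0: "M \<ge> 0" unfolding m_def M_def by (auto simp: le_max_iff_disj)
    have MLm: "M \<le> L^2 * m"
    proof -
      have L2: "1 \<le> L^2" using L1 by (simp add: one_le_power)
      have "1 * nA^2 \<le> L^2 * nA^2" "1 * nM^2 \<le> L^2 * nM^2"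
        using L2 by (intro mult_right_mono; simp)+
      hence x1: "nA^2 \<le> L^2 * nA^2" "nM^2 \<le> L^2 * nM^2" by simp_all
      have x2: "nA^2 \<le> (L*nM)^2" using AM by (intro power_mono) (auto simp: nA_def)
      have x3: "nM^2 \<le> (L*nA)^2" using MA by (intro power_mono) (auto simp: nM_def)
      show ?thesis using x1 x2 x3 unfolding M_def m_def by (auto simp: power_mult_distrib)
    qed
    have TpT: "Tp \<subseteq> T" unfolding Tp_def subplus_def by auto
    have Tne: "T \<noteq> {}" using Tpne TpT by auto
    have cH: "compact HH" unfolding HH_def by (intro finite_imp_compact_convex_hull) auto
    have bH: "bounded HH" using cH compact_imp_bounded by auto
    have oT: "open T" unfolding TH by simp
    have bT: "bounded T" unfolding TH using bH interior_subset bounded_subset by blast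
    have clT: "closure T = HH"
    proof -
      have "closure T = closure HH" unfolding TH
        by (rule convex_closure_interior) (use Tne TH HH_def in auto)
      thus ?thesis using cH compact_imp_closed closure_closed by metis
    qed
    have abc: "a \<in> HH" "b \<in> HH" "c \<in> HH" unfolding HH_def by (auto intro: hull_inc)
    have hcl: "h = diameter HH" unfolding h_def clT[symmetric] using diameter_closure[OF bT] by simp
    have dle: "\<And>u v. u \<in> HH \<Longrightarrow> v \<in> HH \<Longrightarrow> norm (v - u) \<le> h"
      unfolding hcl using diameter_bounded_bound[OF bH] by (metis dist_norm)
    obtain x0 r0 where r0: "r0 > 0" "ball x0 r0 \<subseteq> T"
      using oT Tne by (metis all_not_in_conv openE)
    have dball: "\<And>x r. r > 0 \<Longrightarrow> ball x r \<subseteq> T \<Longrightarrow> 2*r \<le> h"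
    proof -
      fix x r :: "real" and xx :: "real^2"
      show "\<And>x r. r > 0 \<Longrightarrow> ball x r \<subseteq> T \<Longrightarrow> 2*r \<le> h"
        using diameter_subset[OF _ bT] diameter_ball unfolding h_def by (metis not_less_iff_gr_or_eq)
    qed
    have hpos: "h > 0" using dball[OF r0] r0(1) by simp
    define R where "R = {r. \<exists>x. ball x r \<subseteq> T}"
    have r0R: "r0 \<in> R" unfolding R_def using r0 by auto
    have bddR: "bdd_above R"
    proof (rule bdd_aboveI[of _ h])
      fix r assume "r \<in> R"
      then obtain x where "ball x r \<subseteq> T" unfolding R_def by auto
      thus "r \<le> h" using dball[of r x] hpos by (cases "r > 0") auto
    qed
    have inr: "inradius T = Sup R" unfolding inradius_def R_def by simp
    have inrpos: "inradius T > 0" unfolding inr using cSup_upper[OF r0R bddR] r0 by simp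
    have rhopos: "\<rho> > 0"
    proof (rule ccontr)
      assume "\<not> \<rho> > 0"
      hence "\<rho> * inradius T \<le> 0" using inrpos by (simp add: mult_nonpos_nonneg)
      thus False using hrho hpos by simp
    qed
    define r1 where "r1 = h / (2*\<rho>)"
    have r1pos: "r1 > 0" unfolding r1_def using hpos rhopos by simp
    have "h / \<rho> \<le> inradius T" using hrho rhopos by (simp add: pos_divide_le_eq mult.commute)
    moreover have "r1 < h / \<rho>" unfolding r1_def using hpos rhopos by (simp add: field_simps)
    ultimately have "r1 < Sup R" using inr by simp
    then obtain r2 where "r2 \<in> R" "r1 < r2" using less_cSup_iff[of R r1] r0R bddR by auto
    then obtain x1 where "ball x1 r2 \<subseteq> T" unfolding R_def by auto
    hence ball1: "ball x1 r1 \<subseteq> T" using \<open>r1 < r2\<close> by (meson less_imp_le order_trans subset_ball)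
    define f where "f = (\<lambda>x. (norm (grad_in Tp Ap Am x))\<^sup>2)"
    have fe: "f = (\<lambda>x. nM^2 + (if x \<in> Tp then nA^2 - nM^2 else 0))"
      unfolding f_def grad_in_def nA_def nM_def by auto
    have Tpeq: "Tp = T \<inter> {x. n \<bullet> x > n \<bullet> e1}"
      unfolding Tp_def subplus_def by (auto simp: inner_diff_right)
    have oTp: "open Tp" unfolding Tpeq using oT by (intro open_Int open_halfspace_gt)
    have TL: "T \<in> lmeasurable" using lmeasurable_open[OF bT oT] .
    have TpL: "Tp \<in> lmeasurable" using lmeasurable_open[OF bounded_subset[OF bT TpT] oTp] .
    have fint: "f integrable_on T"
    proof -
      have "(\<lambda>x. nA^2 - nM^2) integrable_on (Tp \<inter> T)" using TpT TpL integrable_on_const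
        by (metis inf.absorb1)
      hence "(\<lambda>x. if x \<in> Tp then nA^2 - nM^2 else 0) integrable_on T"
        using integrable_restrict_Int[of Tp "\<lambda>x. nA^2 - nM^2" T] by simp
      thus ?thesis unfolding fe by (intro integrable_add integrable_on_const TL)
    qed
    have "integral T (\<lambda>_. m) \<le> integral T f"
      by (rule Henstock_Kurzweil_Integration.integral_le[OF integrable_on_const[OF TL] fint])
        (auto simp: fe m_def)
    moreover have "integral T (\<lambda>_. m) \<ge> m * (pi * r1^2)"
      using ball_measure_lb[OF TL ball1 _ m0] r1pos by simp
    ultimately have Ilb: "integral T f \<ge> m * (pi * r1^2)" by simp
    have I0: "integral T f \<ge> 0" using Ilb m0 by (smt (verit) mult_nonneg_nonneg pi_gt_zero zero_le_power2)
    define g where "g = (\<lambda>x. (norm (grad_bd Tp Ap Am x))\<^sup>2)"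
    have g0: "\<And>x. 0 \<le> g x" unfolding g_def by simp
    have gM: "\<And>x. g x \<le> M" unfolding g_def grad_bd_def M_def nA_def nM_def by auto
    have "bd_integral g a b c \<le> M * norm (b - a) + M * norm (c - b) + M * norm (a - c)"
      unfolding bd_integral_def using edge_le[OF g0 gM M0] by (intro add_mono) auto
    also have "\<dots> \<le> M * h + M * h + M * h"
      using dle abc M0 by (intro add_mono mult_left_mono) auto
    finally have Bub: "bd_integral g a b c \<le> 3 * M * h" by simp
    define I where "I = integral T f"
    define B where "B = bd_integral g a b c"
    have C2: "C^2 \<ge> 4*\<rho>^2*L^2"
    proof -
      have "2*\<rho>*L \<le> C" unfolding C_def using rhopos by simp
      hence "(2*\<rho>*L)^2 \<le> C^2" using rhopos L1 by (intro power_mono) auto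
      thus ?thesis by (simp add: power_mult_distrib)
    qed
    have "B * h \<le> 3 * L^2 * m * h^2"
    proof -
      have "B * h \<le> 3 * M * h * h" using Bub hpos unfolding B_def by (intro mult_right_mono) auto
      also have "\<dots> \<le> 3 * (L^2 * m) * h * h" using MLm hpos by (intro mult_right_mono) auto
      finally show ?thesis by (simp add: power2_eq_square algebra_simps)
    qed
    also have "\<dots> \<le> L^2 * m * pi * h^2"
    proof -
      have "0 \<le> L^2 * m * h^2" using m0 by simp
      hence "(L^2 * m * h^2) * 3 \<le> (L^2 * m * h^2) * pi" using pi_gt3 by (intro mult_left_mono) auto
      thus ?thesis by (simp add: algebra_simps)
    qed
    also have "\<dots> = (4*\<rho>^2*L^2) * (m * (pi * r1^2))"
      unfolding r1_def using rhopos by (simp add: field_simps power2_eq_square)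
    also have "\<dots> \<le> C^2 * I"
      unfolding I_def using C2 Ilb m0 by (intro mult_mono) auto
    finally have BI: "B * h \<le> C^2 * I" .
    hence "B \<le> C^2 * I / h" using hpos by (simp add: pos_le_divide_eq)
    hence "sqrt B \<le> sqrt (C^2 * I / h)" by (rule real_sqrt_le_mono)
    also have "sqrt (C^2 * I / h) = C * (1 / sqrt h) * sqrt I"
      using Cpos by (simp add: real_sqrt_mult real_sqrt_divide)
    also have "h powr (-1/2) = 1 / sqrt h"
      using hpos by (simp add: powr_minus_divide powr_half_sqrt)
    ultimately have fin: "sqrt B \<le> C * h powr (-1/2) * sqrt I" by simp
    show "sqrt (bd_integral (\<lambda>x. (norm (grad_bd (subplus (tri a b c) e1 n) Ap Am x))\<^sup>2) a b c)
       \<le> C * diameter (tri a b c) powr (-1/2) *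
         sqrt (integral (tri a b c) (\<lambda>x. (norm (grad_in (subplus (tri a b c) e1 n) Ap Am x))\<^sup>2))"
      using fin unfolding B_def I_def g_def f_def Tp_def T_def h_def .
  qed
qed

end
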